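(* Let $C,w,n_{\max}>0$ and $\epsilon\in(0,10^{-3})$. There is $R_2>0$ depending on $C,w,n_{\max}$ such that if $I$ is an interval of length $R\ge R_2$ the following holds. Suppose $\mathcal{P}=\{J_1,\dots,J_{n_0},J^{(1)}_1,\dots,J^{(1)}_{n_1},\dots,J^{(m)}_1,\dots,J^{(m)}_{n_m}\}$ is a partition of $I$ into intervals with disjoint interiors, with $n_i\le n_{\max}$ for all $i\ge1$, and let $\mathcal{P}_b=\{J^{(p)}_i:1\le p\le m,1\le i\le n_p\}$. Suppose (1) $\sum_{J\in\mathcal{P}_b}l(J)\ge(1-\epsilon)R$; and (2) for any $J^{(p)}_i,J^{(q)}_j\in\mathcal{P}_b$ with $p\ne q$, $$d(J^{(p)}_i,J^{(q)}_j)\ge\max\Big(R_2,\;C\min\big(l(J^{(p)}_i),l(J^{(q)}_j)\big)^{1+w}\Big).$$ Then there exists $J^{(j_0)}_{i_0}\in\mathcal{P}_b$ with $l(J^{(j_0)}_{i_0})\ge\frac{1}{32n_{\max}}R$ and $\sum_{i=1}^{n_{j_0}}l(J^{(j_0)}_i)\ge\frac34R$.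
   Context: $l(J)$ is the length of the interval $J$, and $d(J,J')$ is the distance between two disjoint intervals (the infimum of $|s-t|$, $s\in J$, $t\in J'$). *)

theory Defs
  imports "HOL-Analysis.Analysis"
begin

text \<open>A closed real interval is represented by the pair of its endpoints (a, b), a < b.\<close>

definition ivl :: "real \<times> real \<Rightarrow> real set" where
  "ivl J = {fst J .. snd J}"

definition ivl_interior :: "real \<times> real \<Rightarrow> real set" where
  "ivl_interior J = {fst J <..< snd J}"

definition len :: "real \<times> real \<Rightarrow> real" where
  "len J = snd J - fst J"

definition ivl_dist :: "real \<times> real \<Rightarrow> real \<times> real \<Rightarrow> real" where
  "ivl_dist J J' = Inf {\<bar>s - t\<bar> | s t. s \<in> ivl J \<and> t \<in> ivl J'}"

text \<open>Index set of the partition: Inl i (i < n0) for J_{i+1}, Inr (p,i) (p < m, i < n p)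
  for J^{(p+1)}_{i+1}.\<close>
definition part_idx :: "nat \<Rightarrow> nat \<Rightarrow> (nat \<Rightarrow> nat) \<Rightarrow> (nat + nat \<times> nat) set" where
  "part_idx n0 m n = Inl ` {..<n0} \<union> {Inr (p, i) | p i. p < m \<and> i < n p}"

definition part_fam :: "(nat \<Rightarrow> real \<times> real) \<Rightarrow> (nat \<Rightarrow> nat \<Rightarrow> real \<times> real)
    \<Rightarrow> nat + nat \<times> nat \<Rightarrow> real \<times> real" where
  "part_fam G B k = (case k of Inl i \<Rightarrow> G i | Inr (p, i) \<Rightarrow> B p i)"

end

theory Submission
  imports Defs
begin



lemma pack:
  fixes x :: "nat \<Rightarrow> real"
  assumes "finite Q" "Q \<noteq> {}" "\<forall>q\<in>Q. s \<le> x q \<and> x q \<le> t"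
    "\<forall>q\<in>Q. \<forall>q'\<in>Q. q \<noteq> q' \<longrightarrow> D \<le> \<bar>x q - x q'\<bar>" "D > 0"
  shows "real (card Q) * D \<le> t - s + D"
  using assms
proof (induction "card Q" arbitrary: Q t rule: less_induct)
  case less
  define mx where "mx = Max (x ` Q)"
  have "mx \<in> x ` Q" unfolding mx_def using less.prems by (intro Max_in) auto
  then obtain qm where qm: "qm \<in> Q" "x qm = mx" by auto
  have le: "\<forall>q\<in>Q. x q \<le> mx" unfolding mx_def using less.prems by auto
  show ?case
  proof (cases "Q - {qm} = {}")
    case True
    then have "Q = {qm}" using qm by auto
    then show ?thesis using less.prems qm by auto
  next
    case False
    have sub: "\<forall>q\<in>Q - {qm}. s \<le> x q \<and> x q \<le> mx - D"
    proof
      fix q assume q: "q \<in> Q - {qm}"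
      then have "D \<le> \<bar>x q - x qm\<bar>" using less.prems(4) qm by auto
      moreover have "x q \<le> mx" using le q by auto
      ultimately show "s \<le> x q \<and> x q \<le> mx - D" using q less.prems(3) qm by auto
    qed
    have "card (Q - {qm}) < card Q" using qm less.prems(1) by (meson card_Diff1_less)
    then have IH: "real (card (Q - {qm})) * D \<le> mx - D - s + D"
      using less.hyps[of "Q - {qm}" "mx - D"] less.prems False sub by auto
    have "card Q = Suc (card (Q - {qm}))" using qm less.prems(1)
      by (metis card_Suc_Diff1)
    then have "real (card Q) * D = real (card (Q - {qm})) * D + D" by (simp add: algebra_simps)
    also have "\<dots> \<le> mx - s + D" using IH by simp
    also have "\<dots> \<le> t - s + D" using less.prems(3) qm by auto
    finally show ?thesis .
  qed
qed

lemma class_sum: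
  fixes x M :: "nat \<Rightarrow> real"
  assumes "finite Q" "\<forall>q\<in>Q. s \<le> x q \<and> x q \<le> t" "s \<le> t"
    "\<forall>q\<in>Q. \<forall>q'\<in>Q. q \<noteq> q' \<longrightarrow> D \<le> \<bar>x q - x q'\<bar>" "D > 0"
    "\<forall>q\<in>Q. M q \<le> hi" "hi \<ge> 0"
  shows "(\<Sum>q\<in>Q. M q) \<le> hi * ((t - s) / D + 1)"
proof (cases "Q = {}")
  case True
  have "0 \<le> hi * ((t - s) / D + 1)" using assms by (intro mult_nonneg_nonneg) auto
  then show ?thesis using True by simp
next
  case False
  have c: "real (card Q) * D \<le> t - s + D" using pack[OF assms(1) False assms(2,4,5)] .
  then have c2: "real (card Q) \<le> (t - s) / D + 1" using assms(5) by (simp add: field_simps)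
  have "(\<Sum>q\<in>Q. M q) \<le> (\<Sum>q\<in>Q. hi)" using assms(6) by (intro sum_mono) auto
  also have "\<dots> = real (card Q) * hi" by simp
  also have "\<dots> \<le> ((t - s) / D + 1) * hi" using c2 assms(7) by (intro mult_right_mono) auto
  finally show ?thesis by (simp add: mult.commute)
qed


lemma dyadic:
  fixes x M :: "nat \<Rightarrow> real"
  assumes fin: "finite Q" and xin: "\<forall>q\<in>Q. s \<le> x q \<and> x q \<le> t" and st: "s \<le> t"
    and Mnn: "\<forall>q\<in>Q. 0 \<le> M q"
    and sep: "\<forall>q\<in>Q. \<forall>q'\<in>Q. q \<noteq> q' \<longrightarrow> max R2 (C * min (M q) (M q') powr (1+w)) \<le> \<bar>x q - x q'\<bar>"
    and pos: "R2 > 0" "C > 0" "a > 0" "w > 0"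
  shows "(\<Sum>q\<in>{q\<in>Q. M q < a*2^k}. M q) \<le> a*((t-s)/R2+1)
           + (\<Sum>j<k. a*2^(j+1) * ((t-s)/(C*(a*2^j) powr (1+w)) + 1))"
proof (induction k)
  case 0
  show ?case
    apply simp
    apply (rule class_sum[where D=R2 and x=x])
    using fin apply simp
    using xin apply simp
    using st apply simp
    using sep apply (metis (no_types, lifting) max.boundedE mem_Collect_eq)
    using pos apply simp
     apply simp
    using pos by simp
next
  case (Suc k)
  let ?A = "{q\<in>Q. M q < a*2^k}"
  let ?B = "{q\<in>Q. a*2^k \<le> M q \<and> M q < a*2^(Suc k)}"
  have "a*2^k \<le> a*2^(Suc k)" using pos by simp
  then have un: "{q\<in>Q. M q < a*2^(Suc k)} = ?A \<union> ?B" by auto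
  have dj: "?A \<inter> ?B = {}" by auto
  have s1: "(\<Sum>q\<in>{q\<in>Q. M q < a*2^(Suc k)}. M q) = (\<Sum>q\<in>?A. M q) + (\<Sum>q\<in>?B. M q)"
    unfolding un using fin by (intro sum.union_disjoint) auto
  have lo: "0 < C*(a*2^k) powr (1+w)" using pos by auto
  have sepB: "\<forall>q\<in>?B. \<forall>q'\<in>?B. q \<noteq> q' \<longrightarrow> C*(a*2^k) powr (1+w) \<le> \<bar>x q - x q'\<bar>"
  proof (intro ballI impI)
    fix q q' assume q: "q \<in> ?B" and q': "q' \<in> ?B" and ne: "q \<noteq> q'"
    have "a*2^k \<le> min (M q) (M q')" using q q' by auto
    then have "(a*2^k) powr (1+w) \<le> min (M q) (M q') powr (1+w)"
      using pos by (intro powr_mono2) auto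
    then have "C*(a*2^k) powr (1+w) \<le> C * min (M q) (M q') powr (1+w)"
      using pos by (intro mult_left_mono) auto
    also have "\<dots> \<le> \<bar>x q - x q'\<bar>" using sep q q' ne by fastforce
    finally show "C*(a*2^k) powr (1+w) \<le> \<bar>x q - x q'\<bar>" .
  qed
  have "(\<Sum>q\<in>?B. M q) \<le> a*2^(Suc k) * ((t-s)/(C*(a*2^k) powr (1+w)) + 1)"
    apply (rule class_sum[OF _ _ st sepB lo])
    using fin xin pos by auto
  then show ?case using s1 Suc.IH by simp
qed


lemma geo_pow2: "(\<Sum>j<k. a*2^(j+1)) = (a::real)*(2^(k+1) - 2)"
  by (induction k) (auto simp: algebra_simps)

lemma term_eq:
  fixes a C R w :: real
  assumes "a > 0" "C > 0" "w > 0"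
  shows "a*2^(j+1)*(R/(C*(a*2^j) powr (1+w)) + 1)
     = (2*R/(C*a powr w)) * (inverse (2 powr w))^j + a*2^(j+1)"
proof -
  have p2: "((2::real)^j) powr w = (2 powr w)^j"
    by (simp add: powr_power powr_realpow[symmetric] powr_powr mult.commute)
  have "(a*2^j) powr (1+w) = (a*2^j) * (a powr w * (2 powr w)^j)"
    using assms by (simp add: powr_add powr_mult p2)
  then show ?thesis using assms
    by (simp add: field_simps power_inverse)
qed

lemma geo_bound:
  fixes a C R w :: real
  assumes "a > 0" "C > 0" "w > 0" "R \<ge> 0"
  shows "(\<Sum>j<k. a*2^(j+1)*(R/(C*(a*2^j) powr (1+w)) + 1))
     \<le> 2*R/(C*a powr w) * (2 powr w / (2 powr w - 1)) + a*2^(k+1)"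
proof -
  define r where "r = (2::real) powr w"
  have r1: "r > 1" unfolding r_def using assms by auto
  have e1: "(\<Sum>j<k. a*2^(j+1)*(R/(C*(a*2^j) powr (1+w)) + 1))
     = (\<Sum>j<k. (2*R/(C*a powr w)) * (inverse r)^j + a*2^(j+1))"
    by (intro sum.cong refl) (rule term_eq[OF assms(1-3), folded r_def])
  have e2: "(\<Sum>j<k. (2*R/(C*a powr w)) * (inverse r)^j + a*2^(j+1)) = (2*R/(C*a powr w)) * (\<Sum>j<k. (inverse r)^j) + (\<Sum>j<k. a*2^(j+1))"
    by (simp only: sum.distrib sum_distrib_left)
  have "(\<Sum>j<k. (inverse r)^j) = (1 - (inverse r)^k) / (1 - inverse r)"
    using r1 by (simp add: sum_gp_strict)
  also have "\<dots> \<le> 1 / (1 - inverse r)"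
    using r1 by (intro divide_right_mono) (auto simp: field_simps)
  also have "1 / (1 - inverse r) = r / (r - 1)" using r1 by (simp add: field_simps)
  finally have g: "(\<Sum>j<k. (inverse r)^j) \<le> r / (r - 1)" .
  have c: "0 \<le> 2*R/(C*a powr w)" using assms by auto
  have "(2*R/(C*a powr w)) * (\<Sum>j<k. (inverse r)^j) \<le> (2*R/(C*a powr w)) * (r/(r-1))"
    using mult_left_mono[OF g c] .
  moreover have "(\<Sum>j<k. a*2^(j+1)) \<le> a*2^(k+1)" using geo_pow2[of a k] assms by simp
  ultimately show ?thesis
    using e1 e2 unfolding r_def by linarith
qed



lemma ivl_dist_le:
  assumes "fst J \<le> snd J" "fst J' \<le> snd J'"
  shows "ivl_dist J J' \<le> \<bar>fst J - fst J'\<bar>"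
  unfolding ivl_dist_def
proof (rule cInf_lower)
  show "\<bar>fst J - fst J'\<bar> \<in> {\<bar>s - t\<bar> |s t. s \<in> ivl J \<and> t \<in> ivl J'}"
    using assms unfolding ivl_def by auto
  show "bdd_below {\<bar>s - t\<bar> |s t. s \<in> ivl J \<and> t \<in> ivl J'}"
    by (rule bdd_belowI[where m=0]) auto
qed

lemma core:
  fixes C w a R2 \<epsilon> s t R :: real and nmax n0 m :: nat and n :: "nat \<Rightarrow> nat"
    and G :: "nat \<Rightarrow> real \<times> real" and B :: "nat \<Rightarrow> nat \<Rightarrow> real \<times> real"
  assumes Cpos: "C > 0" and wpos: "w > 0" and npos: "nmax > 0" and R2pos: "R2 > 0" and apos: "a > 0"
    and F1: "a * (R / R2) \<le> R / (40 * nmax)"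
    and F2: "2 * a \<le> R / (40 * nmax)"
    and Fg: "2*R/(C*a powr w) * (2 powr w / (2 powr w - 1)) \<le> R / (40 * nmax)"
    and F3: "\<forall>y. y \<ge> R / (160 * nmax) \<longrightarrow> C * y powr (1+w) \<ge> R"
    and h1: "0 < \<epsilon>" and h2: "\<epsilon> < 10 powr (-3)"
    and hR: "R = t - s" and hR2: "R \<ge> R2"
    and hlt: "\<forall>k \<in> part_idx n0 m n. fst (part_fam G B k) < snd (part_fam G B k)"
    and hun: "(\<Union>k \<in> part_idx n0 m n. ivl (part_fam G B k)) = {s..t}"
    and hn: "\<forall>p < m. n p \<le> nmax"
    and hsum: "(\<Sum>p<m. \<Sum>i<n p. len (B p i)) \<ge> (1 - \<epsilon>) * R"
    and hsep: "\<forall>p < m. \<forall>q < m. \<forall>i < n p. \<forall>j < n q. p \<noteq> q \<longrightarrow>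
           ivl_dist (B p i) (B q j) \<ge>
             max R2 (C * (min (len (B p i)) (len (B q j))) powr (1 + w))"
  shows "\<exists>j0 < m. \<exists>i0 < n j0. len (B j0 i0) \<ge> R / (32 * real nmax) \<and>
             (\<Sum>i<n j0. len (B j0 i)) \<ge> 3 / 4 * R"
proof -
  have Rpos: "R > 0" using R2pos hR2 by linarith
  have eps: "\<epsilon> < 1/1000" using h2 by (simp add: powr_minus powr_numeral)
  have inB: "s \<le> fst (B p i) \<and> fst (B p i) < snd (B p i) \<and> snd (B p i) \<le> t"
    if "p < m" "i < n p" for p i
  proof -
    have k: "Inr (p, i) \<in> part_idx n0 m n" using that unfolding part_idx_def by auto
    have pf: "part_fam G B (Inr (p, i)) = B p i" unfolding part_fam_def by simp
    have lt: "fst (B p i) < snd (B p i)" using hlt[rule_format, OF k] pf by simp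
    have "ivl (part_fam G B (Inr (p, i))) \<subseteq> (\<Union>k \<in> part_idx n0 m n. ivl (part_fam G B k))"
      using k by (rule UN_upper)
    then have "ivl (B p i) \<subseteq> {s..t}" using hun pf by simp
    then have "fst (B p i) \<in> {s..t}" "snd (B p i) \<in> {s..t}" using lt unfolding ivl_def by auto
    then show ?thesis using lt by auto
  qed
  define Q where "Q = {g. g < m \<and> 0 < n g}"
  have finQ: "finite Q" unfolding Q_def by auto
  have ex: "\<forall>g\<in>Q. \<exists>i. i < n g \<and> (\<forall>i'<n g. len (B g i') \<le> len (B g i))"
  proof
    fix g assume g: "g \<in> Q"
    define v where "v = Max ((\<lambda>i. len (B g i)) ` {..<n g})"
    have ne: "{..<n g} \<noteq> {}" using g unfolding Q_def by auto
    have "v \<in> (\<lambda>i. len (B g i)) ` {..<n g}" unfolding v_def using ne by (intro Max_in) auto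
    then obtain i where i: "i < n g" "len (B g i) = v" by auto
    have "\<forall>i'<n g. len (B g i') \<le> v" unfolding v_def by auto
    then show "\<exists>i. i < n g \<and> (\<forall>i'<n g. len (B g i') \<le> len (B g i))" using i by auto
  qed
  obtain ig where ig: "\<forall>g\<in>Q. ig g < n g \<and> (\<forall>i'<n g. len (B g i') \<le> len (B g (ig g)))"
    using bchoice[OF ex] by blast
  define M where "M g = len (B g (ig g))" for g
  define x where "x g = fst (B g (ig g))" for g
  have Qm: "g < m" if "g \<in> Q" for g using that unfolding Q_def by auto
  have Mpos: "\<forall>g\<in>Q. 0 \<le> M g"
  proof
    fix g assume g: "g \<in> Q"
    have "fst (B g (ig g)) < snd (B g (ig g))" using inB[OF Qm[OF g]] ig g by blast
    then show "0 \<le> M g" unfolding M_def len_def by simp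
  qed
  have xin: "\<forall>g\<in>Q. s \<le> x g \<and> x g \<le> t" unfolding x_def using inB ig Qm by force
  have xlt: "\<forall>g\<in>Q. x g < t" unfolding x_def using inB ig Qm by force
  have sep: "\<forall>g\<in>Q. \<forall>g'\<in>Q. g \<noteq> g' \<longrightarrow> max R2 (C * min (M g) (M g') powr (1+w)) \<le> \<bar>x g - x g'\<bar>"
  proof (intro ballI impI)
    fix g g' assume g: "g \<in> Q" and g': "g' \<in> Q" and ne: "g \<noteq> g'"
    have "max R2 (C * min (M g) (M g') powr (1+w)) \<le> ivl_dist (B g (ig g)) (B g' (ig g'))"
      unfolding M_def using hsep[rule_format, OF Qm[OF g] Qm[OF g'], of "ig g" "ig g'"] ig g g' ne by simp
    also have "\<dots> \<le> \<bar>x g - x g'\<bar>" unfolding x_def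
      using inB Qm[OF g] Qm[OF g'] ig g g' by (intro ivl_dist_le) (auto intro: less_imp_le)
    finally show "max R2 (C * min (M g) (M g') powr (1+w)) \<le> \<bar>x g - x g'\<bar>" .
  qed
  have st: "s \<le> t" using Rpos hR by simp
  define \<eta> where "\<eta> = R / (160 * nmax)"
  have "\<exists>k. \<eta> \<le> a * 2^k"
  proof -
    obtain k where "\<eta> / a < 2^k" using real_arch_pow[of 2 "\<eta> / a"] by auto
    then have "\<eta> < a * 2^k" using apos by (simp add: field_simps)
    then show ?thesis by (intro exI[of _ k]) simp
  qed
  define k where "k = (LEAST k. \<eta> \<le> a * 2^k)"
  have k1: "\<eta> \<le> a * 2^k" unfolding k_def using \<open>\<exists>k. \<eta> \<le> a * 2^k\<close> by (rule LeastI_ex)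
  have k2: "a * 2^(k+1) \<le> R / (40 * nmax)"
  proof (cases k)
    case 0 then show ?thesis using F2 by simp
  next
    case (Suc k')
    have "k' < (LEAST k. \<eta> \<le> a * 2^k)" using Suc k_def by simp
    then have "\<not> \<eta> \<le> a * 2^k'" by (rule not_less_Least)
    then have "a * 2^k' < \<eta>" by simp
    then have "a * 2^(k+1) < 4 * \<eta>" using Suc by simp
    then show ?thesis unfolding \<eta>_def by simp
  qed
  define Qs where "Qs = {g\<in>Q. M g < a*2^k}"
  define Qb where "Qb = {g\<in>Q. \<not> M g < a*2^k}"
  have small: "(\<Sum>g\<in>Qs. M g) \<le> R / (10 * nmax)"
  proof -
    have d: "(\<Sum>g\<in>Qs. M g) \<le> a*((t-s)/R2+1)
           + (\<Sum>j<k. a*2^(j+1) * ((t-s)/(C*(a*2^j) powr (1+w)) + 1))"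
      unfolding Qs_def using dyadic[OF finQ xin st Mpos sep R2pos Cpos apos wpos] .
    have d2: "(\<Sum>g\<in>Qs. M g) \<le> a*(R/R2+1)
           + (\<Sum>j<k. a*2^(j+1) * (R/(C*(a*2^j) powr (1+w)) + 1))"
      using d unfolding hR .
    have g: "(\<Sum>j<k. a*2^(j+1) * (R/(C*(a*2^j) powr (1+w)) + 1))
       \<le> 2*R/(C*a powr w) * (2 powr w / (2 powr w - 1)) + a*2^(k+1)"
      using geo_bound[OF apos Cpos wpos, of R k] Rpos by simp
    have e: "a*(R/R2+1) = a * (R / R2) + a" by (simp add: algebra_simps)
    have "R / (40 * nmax) * 4 = R / (10 * nmax)" by simp
    then show ?thesis using d2 g e F1 F2 Fg k2 apos by linarith
  qed
  define S where "S g = (\<Sum>i<n g. len (B g i))" for g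
  have SM: "S g \<le> nmax * M g" if "g \<in> Q" for g
  proof -
    have "S g \<le> (\<Sum>i<n g. M g)" unfolding S_def M_def using ig that by (intro sum_mono) auto
    also have "\<dots> = n g * M g" by simp
    also have "\<dots> \<le> nmax * M g" using hn Qm[OF that] Mpos that by (intro mult_right_mono) auto
    finally show ?thesis .
  qed
  have tot: "(\<Sum>p<m. S p) = (\<Sum>g\<in>Q. S g)"
    unfolding S_def Q_def by (intro sum.mono_neutral_right) auto
  have QU: "Q = Qs \<union> Qb" "Qs \<inter> Qb = {}" unfolding Qs_def Qb_def by auto
  have "(\<Sum>g\<in>Q. S g) = (\<Sum>g\<in>Qs. S g) + (\<Sum>g\<in>Qb. S g)"
    using QU finQ by (simp add: sum.union_disjoint)
  moreover have "(\<Sum>g\<in>Qs. S g) \<le> (\<Sum>g\<in>Qs. nmax * M g)" using SM unfolding Qs_def by (intro sum_mono) auto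
  moreover have "(\<Sum>g\<in>Qs. nmax * M g) = nmax * (\<Sum>g\<in>Qs. M g)" by (simp add: sum_distrib_left)
  moreover have "nmax * (\<Sum>g\<in>Qs. M g) \<le> R / 10" using small npos by (simp add: field_simps)
  moreover have "(\<Sum>p<m. S p) \<ge> (1 - \<epsilon>) * R" using hsum unfolding S_def .
  moreover have "(1 - \<epsilon>) * R \<ge> (999/1000) * R" using eps Rpos by (intro mult_right_mono) auto
  ultimately have big: "(\<Sum>g\<in>Qb. S g) \<ge> 3/4 * R" using tot Rpos by linarith
  have "Qb \<noteq> {}" using big Rpos by auto
  then obtain p where p: "p \<in> Qb" by auto
  have "Qb = {p}"
  proof (rule ccontr)
    assume "Qb \<noteq> {p}"
    then obtain g where g: "g \<in> Qb" "g \<noteq> p" using p by auto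
    have "\<eta> \<le> min (M g) (M p)" using g p k1 unfolding Qb_def by auto
    then have "R \<le> C * min (M g) (M p) powr (1+w)" using F3 unfolding \<eta>_def by blast
    also have "\<dots> \<le> \<bar>x g - x p\<bar>" using sep g p unfolding Qb_def by fastforce
    also have "\<dots> < R"
    proof -
      have gq: "g \<in> Q" and pq: "p \<in> Q" using g p unfolding Qb_def by auto
      have "s \<le> x g" "x g < t" "s \<le> x p" "x p < t" using xin xlt gq pq by auto
      then show ?thesis using hR by (simp add: abs_less_iff)
    qed
    finally show False by simp
  qed
  then have Sp: "S p \<ge> 3/4 * R" using big by simp
  have pQ: "p \<in> Q" using p unfolding Qb_def by auto
  have "3/4 * R \<le> nmax * M p" using Sp SM[OF pQ] by linarith
  then have "R / (32 * real nmax) \<le> M p" using npos Rpos by (simp add: field_simps)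
  then show ?thesis using Qm[OF pQ] ig pQ Sp unfolding M_def S_def by blast
qed


lemma params:
  fixes C w :: real and nmax :: nat
  assumes Cpos: "C > 0" and wpos: "w > 0" and npos: "nmax > 0"
  shows "\<exists>R2>0. \<exists>a>0. \<forall>R. R \<ge> R2 \<longrightarrow>
      a * (R / R2) \<le> R / (40 * nmax) \<and>
      2 * a \<le> R / (40 * nmax) \<and>
      2*R/(C*a powr w) * (2 powr w / (2 powr w - 1)) \<le> R / (40 * nmax) \<and>
      (\<forall>y. y \<ge> R / (160 * nmax) \<longrightarrow> C * y powr (1+w) \<ge> R)"
proof -
  define r where "r = (2::real) powr w"
  have r1: "r > 1" unfolding r_def using wpos by auto
  define K0 where "K0 = 2*r/(C*(r-1))"
  have K0pos: "K0 > 0" unfolding K0_def using r1 Cpos by auto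
  define a where "a = (40*nmax*K0) powr (1/w)"
  have apos: "a > 0" unfolding a_def using K0pos npos by auto
  have aw: "a powr w = 40*nmax*K0" unfolding a_def using K0pos npos wpos
    by (simp add: powr_powr)
  define \<eta> where "\<eta> = 1 / (160 * real nmax)"
  have etapos: "\<eta> > 0" unfolding \<eta>_def using npos by auto
  define Z where "Z = (1/(C * \<eta> powr (1+w))) powr (1/w)"
  have Zw: "Z powr w = 1/(C * \<eta> powr (1+w))" unfolding Z_def using wpos Cpos etapos
    by (simp add: powr_powr)
  define R2 where "R2 = max (80 * nmax * a) Z + 1"
  have h80: "0 < 80*real nmax*a" using apos npos by simp
  have R2pos: "R2 > 0" unfolding R2_def using h80 max.cobounded1[of "80*real nmax*a" Z] by linarith
  show ?thesis
  proof (rule exI[of _ R2], rule conjI[OF R2pos], rule exI[of _ a], rule conjI[OF apos], intro allI impI conjI)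
    fix R assume R: "R \<ge> R2"
    have Rpos: "R > 0" using R R2pos by linarith
    have R80: "80 * nmax * a \<le> R2" unfolding R2_def by simp
    have ZR: "Z \<le> R" using R unfolding R2_def by simp
    show "a * (R / R2) \<le> R / (40 * nmax)"
    proof -
      have e: "a * (R / R2) = R * (a / R2)" by simp
      have "a / R2 \<le> 1 / (80 * nmax)" using R80 R2pos npos apos
        by (simp add: field_simps)
      then have "R * (a / R2) \<le> R * (1 / (80 * nmax))" using Rpos by (intro mult_left_mono) auto
      also have "\<dots> \<le> R / (40 * nmax)" using Rpos npos by (simp add: field_simps)
      finally show ?thesis using e by (simp add: mult.commute)
    qed
    show "2 * a \<le> R / (40 * nmax)"
      using R80 R npos apos by (simp add: field_simps)
    show "2*R/(C*a powr w) * (2 powr w / (2 powr w - 1)) \<le> R / (40 * nmax)"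
    proof -
      have "2*R/(C*a powr w) * (2 powr w / (2 powr w - 1)) = R * K0 / a powr w"
        unfolding K0_def r_def using Cpos r1 apos by (simp add: field_simps r_def)
      also have "\<dots> = R / (40 * nmax)" unfolding aw using K0pos npos by (simp add: field_simps)
      finally show ?thesis by simp
    qed
    fix y assume y: "y \<ge> R / (160 * nmax)"
    show "C * y powr (1+w) \<ge> R"
    proof -
      have y': "\<eta> * R \<le> y" using y unfolding \<eta>_def by simp
      have Rw: "R powr w \<ge> 1/(C * \<eta> powr (1+w))"
        using powr_mono2[of w Z R] ZR wpos Zw Rpos unfolding Z_def
        by (metis Z_def Zw less_eq_real_def powr_ge_zero)
      have "(\<eta> * R) powr (1+w) \<le> y powr (1+w)" using y' etapos Rpos wpos
        by (intro powr_mono2) auto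
      moreover have "(\<eta> * R) powr (1+w) = \<eta> powr (1+w) * (R * R powr w)"
        using etapos Rpos by (simp add: powr_mult powr_add)
      moreover have "C * (\<eta> powr (1+w) * (R * R powr w)) \<ge> R"
      proof -
        have "C * \<eta> powr (1+w) * R powr w \<ge> C * \<eta> powr (1+w) * (1/(C * \<eta> powr (1+w)))"
          using Rw Cpos etapos by (intro mult_left_mono) auto
        also have "C * \<eta> powr (1+w) * (1/(C * \<eta> powr (1+w))) = 1" using Cpos etapos by simp
        finally have "1 \<le> C * \<eta> powr (1+w) * R powr w" .
        then have "R * 1 \<le> R * (C * \<eta> powr (1+w) * R powr w)" using Rpos by (intro mult_left_mono) auto
        then show ?thesis by (simp add: algebra_simps)
      qed
      ultimately show "C * y powr (1+w) \<ge> R" using Cpos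
        by (metis mult_left_mono order_trans less_eq_real_def)
    qed
  qed
qed

lemma core2:
  fixes C w a R2 :: real and nmax :: nat
  assumes Cpos: "C > 0" and wpos: "w > 0" and npos: "nmax > 0" and R2pos: "R2 > 0" and apos: "a > 0"
    and P: "\<forall>R. R \<ge> R2 \<longrightarrow>
      a * (R / R2) \<le> R / (40 * nmax) \<and>
      2 * a \<le> R / (40 * nmax) \<and>
      2*R/(C*a powr w) * (2 powr w / (2 powr w - 1)) \<le> R / (40 * nmax) \<and>
      (\<forall>y. y \<ge> R / (160 * nmax) \<longrightarrow> C * y powr (1+w) \<ge> R)"
  shows "\<forall>\<epsilon> :: real. \<forall>s t R :: real. \<forall>n0 m :: nat. \<forall>n :: nat \<Rightarrow> nat.
     \<forall>G :: nat \<Rightarrow> real \<times> real. \<forall>B :: nat \<Rightarrow> nat \<Rightarrow> real \<times> real.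
       0 < \<epsilon> \<and> \<epsilon> < 10 powr (-3) \<and>
       R = t - s \<and> R \<ge> R2 \<and>
       (\<forall>k \<in> part_idx n0 m n. fst (part_fam G B k) < snd (part_fam G B k)) \<and>
       (\<Union>k \<in> part_idx n0 m n. ivl (part_fam G B k)) = {s..t} \<and>
       (\<forall>k \<in> part_idx n0 m n. \<forall>k' \<in> part_idx n0 m n. k \<noteq> k' \<longrightarrow>
           ivl_interior (part_fam G B k) \<inter> ivl_interior (part_fam G B k') = {}) \<and>
       (\<forall>p < m. n p \<le> nmax) \<and>
       (\<Sum>p<m. \<Sum>i<n p. len (B p i)) \<ge> (1 - \<epsilon>) * R \<and>
       (\<forall>p < m. \<forall>q < m. \<forall>i < n p. \<forall>j < n q. p \<noteq> q \<longrightarrow>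
           ivl_dist (B p i) (B q j) \<ge>
             max R2 (C * (min (len (B p i)) (len (B q j))) powr (1 + w)))
     \<longrightarrow> (\<exists>j0 < m. \<exists>i0 < n j0. len (B j0 i0) \<ge> R / (32 * real nmax) \<and>
             (\<Sum>i<n j0. len (B j0 i)) \<ge> 3 / 4 * R)"
  apply (intro allI impI)
  apply (elim conjE)
  subgoal premises H for \<epsilon> s t R n0 m n G B
  proof -
    have PR: "a * (R / R2) \<le> R / (40 * nmax)" "2 * a \<le> R / (40 * nmax)"
      "2*R/(C*a powr w) * (2 powr w / (2 powr w - 1)) \<le> R / (40 * nmax)"
      "\<forall>y. y \<ge> R / (160 * nmax) \<longrightarrow> C * y powr (1+w) \<ge> R"
      using P H(4) by blast+
    show ?thesis by (rule core[OF Cpos wpos npos R2pos apos PR H(1-6) H(8-10)])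
  qed
  done

theorem lemma5p3:
  fixes C w :: real and nmax :: nat
  assumes "C > 0" and "w > 0" and "nmax > 0"
  shows "\<exists>R2 > 0. \<forall>\<epsilon> :: real. \<forall>s t R :: real. \<forall>n0 m :: nat. \<forall>n :: nat \<Rightarrow> nat.
     \<forall>G :: nat \<Rightarrow> real \<times> real. \<forall>B :: nat \<Rightarrow> nat \<Rightarrow> real \<times> real.
       0 < \<epsilon> \<and> \<epsilon> < 10 powr (-3) \<and>
       R = t - s \<and> R \<ge> R2 \<and>
       (\<forall>k \<in> part_idx n0 m n. fst (part_fam G B k) < snd (part_fam G B k)) \<and>
       (\<Union>k \<in> part_idx n0 m n. ivl (part_fam G B k)) = {s..t} \<and>
       (\<forall>k \<in> part_idx n0 m n. \<forall>k' \<in> part_idx n0 m n. k \<noteq> k' \<longrightarrow>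
           ivl_interior (part_fam G B k) \<inter> ivl_interior (part_fam G B k') = {}) \<and>
       (\<forall>p < m. n p \<le> nmax) \<and>
       (\<Sum>p<m. \<Sum>i<n p. len (B p i)) \<ge> (1 - \<epsilon>) * R \<and>
       (\<forall>p < m. \<forall>q < m. \<forall>i < n p. \<forall>j < n q. p \<noteq> q \<longrightarrow>
           ivl_dist (B p i) (B q j) \<ge>
             max R2 (C * (min (len (B p i)) (len (B q j))) powr (1 + w)))
     \<longrightarrow> (\<exists>j0 < m. \<exists>i0 < n j0. len (B j0 i0) \<ge> R / (32 * real nmax) \<and>
             (\<Sum>i<n j0. len (B j0 i)) \<ge> 3 / 4 * R)"
  proof -
  obtain R2 a where R2pos: "R2 > 0" and apos: "a > 0" and P: "\<forall>R. R \<ge> R2 \<longrightarrow>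
      a * (R / R2) \<le> R / (40 * nmax) \<and>
      2 * a \<le> R / (40 * nmax) \<and>
      2*R/(C*a powr w) * (2 powr w / (2 powr w - 1)) \<le> R / (40 * nmax) \<and>
      (\<forall>y. y \<ge> R / (160 * nmax) \<longrightarrow> C * y powr (1+w) \<ge> R)"
    using params[OF assms] by blast
  show ?thesis
    using R2pos core2[OF assms R2pos apos P] by blast
qed

end
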